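(* Let $K$ be the transition kernel of a Markov chain on a general state space, reversible with respect to $\pi$. For any $f\in L_2(\pi)$ with $\|f\|_{2,\pi}\neq0$ and every integer $n\ge1$, $$\frac{\|K^nf\|_{2,\pi}^2}{\|f\|_{2,\pi}^2}\ge\Big(\frac{\|Kf\|_{2,\pi}^2}{\|f\|_{2,\pi}^2}\Big)^n.$$
   Context: Reversibility: $K(x,dy)\pi(dx)=K(y,dx)\pi(dy)$. $(Kf)(x)=\int K(x,dy)f(y)$, $K^n f=K(K^{n-1}f)$. $\|f\|_{2,\pi}^2=\int f^2d\pi$. *)

theory Defs
  imports "HOL-Probability.Probability"
begin

definition markov_op :: "('a \<Rightarrow> 'a measure) \<Rightarrow> ('a \<Rightarrow> real) \<Rightarrow> 'a \<Rightarrow> real" where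
  "markov_op K f x = (\<integral>y. f y \<partial>(K x))"

definition l2_norm_sq :: "'a measure \<Rightarrow> ('a \<Rightarrow> real) \<Rightarrow> real" where
  "l2_norm_sq \<pi> f = (\<integral>x. (f x)\<^sup>2 \<partial>\<pi>)"

text \<open>Reversibility (detailed balance): K(x,dy) pi(dx) = K(y,dx) pi(dy) as measures on pairs,
  i.e. for all measurable A, B: int_A K(x,B) pi(dx) = int_B K(y,A) pi(dy).\<close>
definition reversible :: "'a measure \<Rightarrow> ('a \<Rightarrow> 'a measure) \<Rightarrow> bool" where
  "reversible \<pi> K \<longleftrightarrow> (\<forall>A\<in>sets \<pi>. \<forall>B\<in>sets \<pi>.
     (\<integral>\<^sup>+x\<in>A. emeasure (K x) B \<partial>\<pi>) = (\<integral>\<^sup>+y\<in>B. emeasure (K y) A \<partial>\<pi>))"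

end

theory Submission
  imports Defs
begin
lemma logconv_Q:
  fixes c :: "nat \<Rightarrow> real"
  assumes nn: "\<And>k. c k \<ge> 0" and lc: "\<And>k. (c (Suc k))^2 \<le> c k * c (Suc (Suc k))"
  shows "c 1 * c k \<le> c (Suc k) * c 0"
proof (induction k)
  case 0 then show ?case by (simp add: mult.commute)
next
  case (Suc k)
  show ?case
  proof (cases "c k = 0")
    case True
    have "(c (Suc k))^2 \<le> 0" using lc[of k] True by simp
    then have "c (Suc k) = 0" by simp
    then show ?thesis using nn[of "Suc (Suc k)"] nn[of 0] by simp
  next
    case False
    then have pos: "c k > 0" using nn[of k] by simp
    have "c k * (c 1 * c (Suc k)) = c (Suc k) * (c 1 * c k)" by (simp add: algebra_simps)
    also have "\<dots> \<le> c (Suc k) * (c (Suc k) * c 0)"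
      using Suc.IH nn[of "Suc k"] by (simp add: mult_left_mono)
    also have "\<dots> = (c (Suc k))^2 * c 0" by (simp add: power2_eq_square algebra_simps)
    also have "\<dots> \<le> c k * c (Suc (Suc k)) * c 0" using lc[of k] nn[of 0] by (simp add: mult_right_mono)
    also have "\<dots> = c k * (c (Suc (Suc k)) * c 0)" by (simp add: algebra_simps)
    finally show ?thesis using pos by (simp add: mult_le_cancel_left)
  qed
qed

lemma logconv_R:
  fixes c :: "nat \<Rightarrow> real"
  assumes nn: "\<And>k. c k \<ge> 0" and lc: "\<And>k. (c (Suc k))^2 \<le> c k * c (Suc (Suc k))"
  shows "c 1 ^ Suc n \<le> c (Suc n) * c 0 ^ n"
proof (induction n)
  case 0 then show ?case by simp
next
  case (Suc n)
  have "c 1 ^ Suc (Suc n) = c 1 * c 1 ^ Suc n" by simp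
  also have "\<dots> \<le> c 1 * (c (Suc n) * c 0 ^ n)" using Suc.IH nn[of 1] by (simp add: mult_left_mono)
  also have "\<dots> = (c 1 * c (Suc n)) * c 0 ^ n" by simp
  also have "\<dots> \<le> (c (Suc (Suc n)) * c 0) * c 0 ^ n"
    using logconv_Q[of c, OF nn lc, of "Suc n"] nn[of 0] by (simp add: mult_right_mono)
  also have "\<dots> = c (Suc (Suc n)) * c 0 ^ Suc n" by simp
  finally show ?case .
qed

lemma logconv:
  fixes c :: "nat \<Rightarrow> real"
  assumes nn: "\<And>k. c k \<ge> 0" and lc: "\<And>k. (c (Suc k))^2 \<le> c k * c (Suc (Suc k))"
    and c0: "c 0 \<noteq> 0" and n: "n \<ge> 1"
  shows "c n / c 0 \<ge> (c 1 / c 0) ^ n"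
proof -
  obtain m where m: "n = Suc m" using n by (cases n) auto
  have p: "c 0 > 0" using nn[of 0] c0 by simp
  have "c 1 ^ n \<le> c n * c 0 ^ m" using logconv_R[of c, OF nn lc, of m] m by simp
  then have "c 1 ^ n / c 0 ^ n \<le> c n * c 0 ^ m / c 0 ^ n" using p by (simp add: divide_right_mono)
  also have "\<dots> = c n / c 0" using p m by (simp add: field_simps)
  finally show ?thesis by (simp add: power_divide)
qed


lemma real_CS:
  fixes u v :: "'b \<Rightarrow> real"
  assumes [measurable]: "u \<in> borel_measurable M" "v \<in> borel_measurable M"
    and iu: "integrable M (\<lambda>x. (u x)\<^sup>2)" and iv: "integrable M (\<lambda>x. (v x)\<^sup>2)"
  shows "(\<integral>x. u x * v x \<partial>M)\<^sup>2 \<le> (\<integral>x. (u x)\<^sup>2 \<partial>M) * (\<integral>x. (v x)\<^sup>2 \<partial>M)"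
proof -
  have b: "ennreal \<bar>\<integral>x. u x * v x \<partial>M\<bar> \<le> (\<integral>\<^sup>+x. ennreal \<bar>u x\<bar> * ennreal \<bar>v x\<bar> \<partial>M)"
  proof (cases "integrable M (\<lambda>x. u x * v x)")
    case True
    from integral_norm_bound_ennreal[OF True] show ?thesis
      by (simp add: abs_mult ennreal_mult)
  next
    case False then show ?thesis by (simp add: not_integrable_integral_eq)
  qed
  have "(\<integral>\<^sup>+x. ennreal \<bar>u x\<bar> * ennreal \<bar>v x\<bar> \<partial>M)\<^sup>2
      \<le> (\<integral>\<^sup>+x. ennreal \<bar>u x\<bar> ^ 2 \<partial>M) * (\<integral>\<^sup>+x. ennreal \<bar>v x\<bar> ^ 2 \<partial>M)"
    by (rule Cauchy_Schwarz_nn_integral) auto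
  also have "(\<integral>\<^sup>+x. ennreal \<bar>u x\<bar> ^ 2 \<partial>M) = ennreal (\<integral>x. (u x)\<^sup>2 \<partial>M)"
    by (simp add: ennreal_power nn_integral_eq_integral[OF iu])
  also have "(\<integral>\<^sup>+x. ennreal \<bar>v x\<bar> ^ 2 \<partial>M) = ennreal (\<integral>x. (v x)\<^sup>2 \<partial>M)"
    by (simp add: ennreal_power nn_integral_eq_integral[OF iv])
  finally have c: "(\<integral>\<^sup>+x. ennreal \<bar>u x\<bar> * ennreal \<bar>v x\<bar> \<partial>M)\<^sup>2 \<le> ennreal ((\<integral>x. (u x)\<^sup>2 \<partial>M) * (\<integral>x. (v x)\<^sup>2 \<partial>M))"
    by (simp add: ennreal_mult integral_nonneg)
  have "ennreal (\<bar>\<integral>x. u x * v x \<partial>M\<bar>\<^sup>2) = (ennreal \<bar>\<integral>x. u x * v x \<partial>M\<bar>)\<^sup>2"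
    by (simp add: ennreal_power)
  also have "\<dots> \<le> (\<integral>\<^sup>+x. ennreal \<bar>u x\<bar> * ennreal \<bar>v x\<bar> \<partial>M)\<^sup>2"
    using b by (rule power_mono) simp
  finally have "ennreal (\<bar>\<integral>x. u x * v x \<partial>M\<bar>\<^sup>2) \<le> ennreal ((\<integral>x. (u x)\<^sup>2 \<partial>M) * (\<integral>x. (v x)\<^sup>2 \<partial>M))"
    using c by (rule order_trans)
  then show ?thesis by (simp add: integral_nonneg)
qed

locale revk =
  fixes \<pi> :: "'a measure" and K :: "'a \<Rightarrow> 'a measure"
  assumes ps: "prob_space \<pi>"
    and Kp: "K \<in> \<pi> \<rightarrow>\<^sub>M prob_algebra \<pi>"
    and rev: "reversible \<pi> K"
begin

lemma Ksub[measurable]: "K \<in> \<pi> \<rightarrow>\<^sub>M subprob_algebra \<pi>"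
  using Kp by (rule measurable_prob_algebraD)

lemma sets_K[simp, measurable_cong]: "x \<in> space \<pi> \<Longrightarrow> sets (K x) = sets \<pi>"
  using sets_kernel[OF Ksub] by blast

lemma space_K[simp]: "x \<in> space \<pi> \<Longrightarrow> space (K x) = space \<pi>"
  using sets_eq_imp_space_eq[OF sets_K] by blast

lemma prob_K: "x \<in> space \<pi> \<Longrightarrow> prob_space (K x)"
  using measurable_space[OF Kp] by (auto simp: space_prob_algebra)

lemma space_ne: "space \<pi> \<noteq> {}"
  using ps prob_space.not_empty by blast

definition Kq :: "'a \<Rightarrow> ('a \<times> 'a) measure" where
  "Kq x = distr (K x) (\<pi> \<Otimes>\<^sub>M \<pi>) (Pair x)"

definition mu :: "('a \<times> 'a) measure" where
  "mu = \<pi> \<bind> Kq"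

lemma Kq_meas: "Kq \<in> \<pi> \<rightarrow>\<^sub>M subprob_algebra (\<pi> \<Otimes>\<^sub>M \<pi>)"
  unfolding Kq_def
  by (rule measurable_distr2[OF _ Ksub]) simp

lemma sets_mu[simp, measurable_cong]: "sets mu = sets (\<pi> \<Otimes>\<^sub>M \<pi>)"
  unfolding mu_def using sets_kernel[OF Kq_meas] space_ne by (intro sets_bind) auto

lemma space_mu[simp]: "space mu = space \<pi> \<times> space \<pi>"
  using sets_eq_imp_space_eq[OF sets_mu] by (simp add: space_pair_measure)

lemma nn_mu:
  assumes [measurable]: "F \<in> borel_measurable (\<pi> \<Otimes>\<^sub>M \<pi>)"
  shows "(\<integral>\<^sup>+z. F z \<partial>mu) = (\<integral>\<^sup>+x. \<integral>\<^sup>+y. F (x,y) \<partial>K x \<partial>\<pi>)"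
  unfolding mu_def
proof (subst nn_integral_bind[OF assms Kq_meas], rule nn_integral_cong)
  fix x assume x: "x \<in> space \<pi>"
  have "Pair x \<in> K x \<rightarrow>\<^sub>M \<pi> \<Otimes>\<^sub>M \<pi>"
    using x by (subst measurable_cong_sets[OF sets_K[OF x] refl]) simp
  then show "integral\<^sup>N (Kq x) F = (\<integral>\<^sup>+ y. F (x, y) \<partial>K x)"
    unfolding Kq_def by (subst nn_integral_distr) auto
qed

lemma emeasure_mu_rect:
  assumes A: "A \<in> sets \<pi>" and B: "B \<in> sets \<pi>"
  shows "emeasure mu (A \<times> B) = (\<integral>\<^sup>+x\<in>A. emeasure (K x) B \<partial>\<pi>)"
proof -
  have "emeasure mu (A \<times> B) = (\<integral>\<^sup>+z. indicator (A \<times> B) z \<partial>mu)"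
    using A B by (simp add: sets_mu)
  also have "\<dots> = (\<integral>\<^sup>+x. \<integral>\<^sup>+y. indicator (A \<times> B) (x,y) \<partial>K x \<partial>\<pi>)"
    using A B by (intro nn_mu borel_measurable_indicator pair_measureI)
  also have "\<dots> = (\<integral>\<^sup>+x. emeasure (K x) B * indicator A x \<partial>\<pi>)"
  proof (rule nn_integral_cong)
    fix x assume x: "x \<in> space \<pi>"
    have "(\<integral>\<^sup>+y. indicator (A \<times> B) (x,y) \<partial>K x) = (\<integral>\<^sup>+y. indicator A x * indicator B y \<partial>K x)"
      by (intro nn_integral_cong) (simp add: indicator_times)
    also have "\<dots> = indicator A x * emeasure (K x) B"
      using B x by (subst nn_integral_cmult) auto
    finally show "(\<integral>\<^sup>+y. indicator (A \<times> B) (x,y) \<partial>K x) = emeasure (K x) B * indicator A x"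
      by (simp add: mult.commute)
  qed
  finally show ?thesis .
qed

lemma mu_sym: "distr mu (\<pi> \<Otimes>\<^sub>M \<pi>) (\<lambda>(x,y). (y,x)) = mu"
proof -
  have sw0: "(\<lambda>(x,y). (y,x)) \<in> (\<pi> \<Otimes>\<^sub>M \<pi>) \<rightarrow>\<^sub>M (\<pi> \<Otimes>\<^sub>M \<pi>)"
    by measurable
  then have sw: "(\<lambda>(x,y). (y,x)) \<in> mu \<rightarrow>\<^sub>M (\<pi> \<Otimes>\<^sub>M \<pi>)"
    by (simp add: measurable_cong_sets[OF sets_mu refl])
  show ?thesis
proof (rule measure_eqI_generator_eq[OF Int_stable_pair_measure_generator[of \<pi> \<pi>], where \<Omega>="space \<pi> \<times> space \<pi>" and A="\<lambda>_. space \<pi> \<times> space \<pi>"])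
  show "{a \<times> b |a b. a \<in> sets \<pi> \<and> b \<in> sets \<pi>} \<subseteq> Pow (space \<pi> \<times> space \<pi>)"
    using sets.space_closed[of \<pi>] by auto
  show "sets (distr mu (\<pi> \<Otimes>\<^sub>M \<pi>) (\<lambda>(x, y). (y, x))) = sigma_sets (space \<pi> \<times> space \<pi>) {a \<times> b |a b. a \<in> sets \<pi> \<and> b \<in> sets \<pi>}"
    by (simp add: sets_pair_measure)
  show "sets mu = sigma_sets (space \<pi> \<times> space \<pi>) {a \<times> b |a b. a \<in> sets \<pi> \<and> b \<in> sets \<pi>}"
    by (simp add: sets_pair_measure)
  show "range (\<lambda>_. space \<pi> \<times> space \<pi>) \<subseteq> {a \<times> b |a b. a \<in> sets \<pi> \<and> b \<in> sets \<pi>}" by auto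
  show "(\<Union>i. space \<pi> \<times> space \<pi>) = space \<pi> \<times> space \<pi>" by simp
  have fin: "emeasure mu (space \<pi> \<times> space \<pi>) \<le> 1"
    using subprob_space.emeasure_space_le_1[OF subprob_space_bind[OF _ Kq_meas]] ps
    unfolding mu_def by (metis prob_space_imp_subprob_space space_mu mu_def)
  then show "\<And>i. emeasure (distr mu (\<pi> \<Otimes>\<^sub>M \<pi>) (\<lambda>(x, y). (y, x))) (space \<pi> \<times> space \<pi>) \<noteq> \<infinity>"
  proof -
    have e: "(\<lambda>(x, y). (y, x)) -` (space \<pi> \<times> space \<pi>) \<inter> space mu = space \<pi> \<times> space \<pi>" by auto
    show "\<And>i. emeasure (distr mu (\<pi> \<Otimes>\<^sub>M \<pi>) (\<lambda>(x, y). (y, x))) (space \<pi> \<times> space \<pi>) \<noteq> \<infinity>"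
    proof -
      have "space \<pi> \<times> space \<pi> \<in> sets (\<pi> \<Otimes>\<^sub>M \<pi>)" by (metis sets.top space_pair_measure)
      from emeasure_distr[OF sw this] e
      have "emeasure (distr mu (\<pi> \<Otimes>\<^sub>M \<pi>) (\<lambda>(x, y). (y, x))) (space \<pi> \<times> space \<pi>) = emeasure mu (space \<pi> \<times> space \<pi>)"
        by simp
      then show "\<And>i. emeasure (distr mu (\<pi> \<Otimes>\<^sub>M \<pi>) (\<lambda>(x, y). (y, x))) (space \<pi> \<times> space \<pi>) \<noteq> \<infinity>"
        using fin by (auto simp: top_unique)
    qed
  qed
  fix X assume "X \<in> {a \<times> b |a b. a \<in> sets \<pi> \<and> b \<in> sets \<pi>}"
  then obtain A B where X: "X = A \<times> B" and A: "A \<in> sets \<pi>" and B: "B \<in> sets \<pi>" by auto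
  have "(\<lambda>(x, y). (y, x)) -` X \<inter> space mu = B \<times> A"
    using X sets.sets_into_space[OF A] sets.sets_into_space[OF B] by auto
  then have "emeasure (distr mu (\<pi> \<Otimes>\<^sub>M \<pi>) (\<lambda>(x, y). (y, x))) X = emeasure mu (B \<times> A)"
    using A B X by (subst emeasure_distr[OF sw]) auto
  also have "\<dots> = (\<integral>\<^sup>+x\<in>B. emeasure (K x) A \<partial>\<pi>)" by (rule emeasure_mu_rect[OF B A])
  also have "\<dots> = (\<integral>\<^sup>+x\<in>A. emeasure (K x) B \<partial>\<pi>)"
    using rev A B unfolding reversible_def by metis
  also have "\<dots> = emeasure mu X" using emeasure_mu_rect[OF A B] X by simp
  finally show "emeasure (distr mu (\<pi> \<Otimes>\<^sub>M \<pi>) (\<lambda>(x, y). (y, x))) X = emeasure mu X" .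
qed
qed

lemma sw[measurable]: "(\<lambda>(x,y). (y,x)) \<in> mu \<rightarrow>\<^sub>M (\<pi> \<Otimes>\<^sub>M \<pi>)"
proof -
  have "(\<lambda>(x,y). (y,x)) \<in> (\<pi> \<Otimes>\<^sub>M \<pi>) \<rightarrow>\<^sub>M (\<pi> \<Otimes>\<^sub>M \<pi>)" by measurable
  then show ?thesis by (simp add: measurable_cong_sets[OF sets_mu refl])
qed

lemma nn_swap:
  assumes [measurable]: "F \<in> borel_measurable (\<pi> \<Otimes>\<^sub>M \<pi>)"
  shows "(\<integral>\<^sup>+z. F z \<partial>mu) = (\<integral>\<^sup>+z. F (snd z, fst z) \<partial>mu)"
proof -
  have "(\<integral>\<^sup>+z. F z \<partial>mu) = (\<integral>\<^sup>+z. F z \<partial>distr mu (\<pi> \<Otimes>\<^sub>M \<pi>) (\<lambda>(x,y). (y,x)))"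
    by (simp add: mu_sym)
  also have "\<dots> = (\<integral>\<^sup>+z. F ((\<lambda>(x,y). (y,x)) z) \<partial>mu)"
    by (rule nn_integral_distr[OF sw]) simp
  finally show ?thesis by (simp add: split_beta)
qed

lemma int_swap:
  fixes F :: "'a \<times> 'a \<Rightarrow> real"
  assumes [measurable]: "F \<in> borel_measurable (\<pi> \<Otimes>\<^sub>M \<pi>)"
  shows "(\<integral>z. F z \<partial>mu) = (\<integral>z. F (snd z, fst z) \<partial>mu)"
proof -
  have "(\<integral>z. F z \<partial>mu) = (\<integral>z. F z \<partial>distr mu (\<pi> \<Otimes>\<^sub>M \<pi>) (\<lambda>(x,y). (y,x)))"
    by (simp add: mu_sym)
  also have "\<dots> = (\<integral>z. F ((\<lambda>(x,y). (y,x)) z) \<partial>mu)"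
    by (rule integral_distr[OF sw]) simp
  finally show ?thesis by (simp add: split_beta)
qed

lemma nn_fst:
  assumes [measurable]: "u \<in> borel_measurable \<pi>"
  shows "(\<integral>\<^sup>+z. u (fst z) \<partial>mu) = (\<integral>\<^sup>+x. u x \<partial>\<pi>)"
proof -
  have "(\<integral>\<^sup>+z. u (fst z) \<partial>mu) = (\<integral>\<^sup>+x. \<integral>\<^sup>+y. u x \<partial>K x \<partial>\<pi>)"
    by (subst nn_mu) auto
  also have "\<dots> = (\<integral>\<^sup>+x. u x \<partial>\<pi>)"
  proof (rule nn_integral_cong)
    fix x assume x: "x \<in> space \<pi>"
    interpret P: prob_space "K x" using prob_K[OF x] .
    show "(\<integral>\<^sup>+y. u x \<partial>K x) = u x" by (simp add: P.emeasure_space_1)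
  qed
  finally show ?thesis .
qed

lemma nn_snd:
  assumes [measurable]: "u \<in> borel_measurable \<pi>"
  shows "(\<integral>\<^sup>+z. u (snd z) \<partial>mu) = (\<integral>\<^sup>+x. u x \<partial>\<pi>)"
  using nn_swap[of "\<lambda>z. u (snd z)"] nn_fst[OF assms] by simp

lemma inner_eq:
  fixes F :: "'a \<times> 'a \<Rightarrow> real"
  assumes [measurable]: "F \<in> borel_measurable (\<pi> \<Otimes>\<^sub>M \<pi>)" and x: "x \<in> space \<pi>"
  shows "(\<integral>z. F z \<partial>Kq x) = (\<integral>y. F (x,y) \<partial>K x)"
proof -
  have "Pair x \<in> K x \<rightarrow>\<^sub>M \<pi> \<Otimes>\<^sub>M \<pi>"
    using x by (subst measurable_cong_sets[OF sets_K[OF x] refl]) simp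
  then show ?thesis unfolding Kq_def by (subst integral_distr) auto
qed

lemma meas_inner[measurable]:
  fixes F :: "'a \<times> 'a \<Rightarrow> real"
  assumes [measurable]: "F \<in> borel_measurable (\<pi> \<Otimes>\<^sub>M \<pi>)"
  shows "(\<lambda>x. \<integral>y. F (x,y) \<partial>K x) \<in> borel_measurable \<pi>"
proof -
  have "(\<lambda>x. \<integral>z. F z \<partial>Kq x) \<in> borel_measurable \<pi>"
    by (rule measurable_compose[OF Kq_meas integral_measurable_subprob_algebra]) simp
  then show ?thesis by (rule measurable_cong[THEN iffD1, rotated]) (simp add: inner_eq)
qed

lemma meas_inner_nn[measurable]:
  assumes [measurable]: "F \<in> borel_measurable (\<pi> \<Otimes>\<^sub>M \<pi>)"
  shows "(\<lambda>x. \<integral>\<^sup>+y. F (x,y) \<partial>K x) \<in> borel_measurable \<pi>"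
  by (rule nn_integral_measurable_subprob_algebra2[OF _ Ksub]) simp

lemma meas_slice:
  assumes F: "F \<in> borel_measurable (\<pi> \<Otimes>\<^sub>M \<pi>)" and x: "x \<in> space \<pi>"
  shows "(\<lambda>y. F (x,y)) \<in> borel_measurable (K x)"
proof -
  have "(\<lambda>y. F (x,y)) \<in> borel_measurable \<pi>" using F x by measurable
  then show ?thesis by (simp add: measurable_cong_sets[OF sets_K[OF x] refl])
qed

lemma int_mu_nonneg:
  fixes G :: "'a \<times> 'a \<Rightarrow> real"
  assumes G[measurable]: "G \<in> borel_measurable (\<pi> \<Otimes>\<^sub>M \<pi>)" and nn: "\<And>z. G z \<ge> 0"
    and fin: "(\<integral>\<^sup>+z. G z \<partial>mu) < \<infinity>"
  shows "(\<integral>z. G z \<partial>mu) = (\<integral>x. \<integral>y. G (x,y) \<partial>K x \<partial>\<pi>)"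
    and "integrable \<pi> (\<lambda>x. \<integral>y. G (x,y) \<partial>K x)"
    and "AE x in \<pi>. integrable (K x) (\<lambda>y. G (x,y))"
proof -
  define P where "P x = (\<integral>\<^sup>+y. ennreal (G (x,y)) \<partial>K x)" for x
  have Pm[measurable]: "P \<in> borel_measurable \<pi>" unfolding P_def by measurable
  have PI: "(\<integral>\<^sup>+x. P x \<partial>\<pi>) = (\<integral>\<^sup>+z. G z \<partial>mu)"
    unfolding P_def by (subst nn_mu) auto
  have AEfin: "AE x in \<pi>. P x \<noteq> \<infinity>"
    by (rule nn_integral_PInf_AE[OF Pm]) (use PI fin in auto)
  have inn: "(\<integral>y. G (x,y) \<partial>K x) = enn2real (P x)" if x: "x \<in> space \<pi>" for x
    unfolding P_def using meas_slice[OF G x] nn by (subst integral_eq_nn_integral) auto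
  have "(\<integral>\<^sup>+x. ennreal (\<integral>y. G (x,y) \<partial>K x) \<partial>\<pi>) = (\<integral>\<^sup>+x. P x \<partial>\<pi>)"
    by (rule nn_integral_cong_AE) (use AEfin in \<open>auto simp: inn less_top\<close>)
  note eqP = this
  show "AE x in \<pi>. integrable (K x) (\<lambda>y. G (x,y))"
    using AEfin
  proof (rule AE_mp, intro AE_I2 impI)
    fix x assume x: "x \<in> space \<pi>" and "P x \<noteq> \<infinity>"
    then show "integrable (K x) (\<lambda>y. G (x,y))"
      using meas_slice[OF G x] nn unfolding P_def
      by (subst integrable_iff_bounded) (auto simp: less_top)
  qed
  show "integrable \<pi> (\<lambda>x. \<integral>y. G (x,y) \<partial>K x)"
    using eqP PI fin nn
    by (subst integrable_iff_bounded) (auto simp: integral_nonneg)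
  have "(\<integral>x. \<integral>y. G (x,y) \<partial>K x \<partial>\<pi>) = enn2real (\<integral>\<^sup>+x. ennreal (\<integral>y. G (x,y) \<partial>K x) \<partial>\<pi>)"
    using nn by (subst integral_eq_nn_integral) (auto intro: integral_nonneg)
  also have "\<dots> = enn2real (\<integral>\<^sup>+z. G z \<partial>mu)" using eqP PI by simp
  also have "\<dots> = (\<integral>z. G z \<partial>mu)"
    using nn by (subst integral_eq_nn_integral) (auto simp: sets_mu)
  finally show "(\<integral>z. G z \<partial>mu) = (\<integral>x. \<integral>y. G (x,y) \<partial>K x \<partial>\<pi>)" ..
qed

lemma int_mu:
  fixes F :: "'a \<times> 'a \<Rightarrow> real"
  assumes F[measurable]: "F \<in> borel_measurable (\<pi> \<Otimes>\<^sub>M \<pi>)" and I: "integrable mu F"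
  shows "(\<integral>z. F z \<partial>mu) = (\<integral>x. \<integral>y. F (x,y) \<partial>K x \<partial>\<pi>)"
proof -
  define Fp where "Fp z = max 0 (F z)" for z
  define Fm where "Fm z = max 0 (- F z)" for z
  have [measurable]: "Fp \<in> borel_measurable (\<pi> \<Otimes>\<^sub>M \<pi>)" "Fm \<in> borel_measurable (\<pi> \<Otimes>\<^sub>M \<pi>)"
    unfolding Fp_def Fm_def by measurable
  have Ip: "integrable mu Fp" unfolding Fp_def using I by (intro integrable_max) auto
  have Im: "integrable mu Fm" unfolding Fm_def using I by (intro integrable_max) auto
  have finp: "(\<integral>\<^sup>+z. Fp z \<partial>mu) < \<infinity>"
    using integrableD(2)[OF Ip] by (simp add: Fp_def less_top)
  have finm: "(\<integral>\<^sup>+z. Fm z \<partial>mu) < \<infinity>"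
    using integrableD(2)[OF Im] by (simp add: Fm_def less_top)
  have nnp: "\<And>z. Fp z \<ge> 0" and nnm: "\<And>z. Fm z \<ge> 0" by (auto simp: Fp_def Fm_def)
  note p = int_mu_nonneg[OF _ nnp finp, simplified] and m = int_mu_nonneg[OF _ nnm finm, simplified]
  have FF: "F z = Fp z - Fm z" for z by (auto simp: Fp_def Fm_def)
  have "(\<integral>z. F z \<partial>mu) = (\<integral>z. Fp z \<partial>mu) - (\<integral>z. Fm z \<partial>mu)"
    unfolding FF by (rule Bochner_Integration.integral_diff[OF Ip Im])
  also have "\<dots> = (\<integral>x. \<integral>y. Fp (x,y) \<partial>K x \<partial>\<pi>) - (\<integral>x. \<integral>y. Fm (x,y) \<partial>K x \<partial>\<pi>)"
    using p(1) m(1) by simp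
  also have "\<dots> = (\<integral>x. (\<integral>y. Fp (x,y) \<partial>K x) - (\<integral>y. Fm (x,y) \<partial>K x) \<partial>\<pi>)"
    by (rule Bochner_Integration.integral_diff[symmetric, OF p(2) m(2)])
  also have "\<dots> = (\<integral>x. \<integral>y. F (x,y) \<partial>K x \<partial>\<pi>)"
  proof (rule integral_cong_AE)
    show "AE x in \<pi>. (\<integral>y. Fp (x,y) \<partial>K x) - (\<integral>y. Fm (x,y) \<partial>K x) = (\<integral>y. F (x,y) \<partial>K x)"
      using p(3) m(3) by eventually_elim (simp add: FF Bochner_Integration.integral_diff)
  qed measurable
  finally show ?thesis .
qed

lemma Kop_meas[measurable]:
  assumes [measurable]: "g \<in> borel_measurable \<pi>"
  shows "markov_op K g \<in> borel_measurable \<pi>"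
  unfolding markov_op_def[abs_def]
  by (rule measurable_compose[OF Ksub integral_measurable_subprob_algebra]) simp

lemma jensen_pt:
  assumes g[measurable]: "g \<in> borel_measurable \<pi>" and x: "x \<in> space \<pi>"
  shows "ennreal ((markov_op K g x)\<^sup>2) \<le> (\<integral>\<^sup>+y. ennreal ((g y)\<^sup>2) \<partial>K x)"
proof (cases "integrable (K x) g")
  case True
  interpret P: prob_space "K x" using prob_K[OF x] .
  have gm[measurable]: "g \<in> borel_measurable (K x)"
    by (simp add: measurable_cong_sets[OF sets_K[OF x] refl])
  have "ennreal ((markov_op K g x)\<^sup>2) = (ennreal \<bar>markov_op K g x\<bar>)\<^sup>2"
    by (simp add: ennreal_power)
  also have "\<dots> \<le> (\<integral>\<^sup>+y. ennreal \<bar>g y\<bar> * 1 \<partial>K x)\<^sup>2"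
    using integral_norm_bound_ennreal[OF True] unfolding markov_op_def
    by (intro power_mono) auto
  also have "\<dots> \<le> (\<integral>\<^sup>+y. ennreal \<bar>g y\<bar> ^ 2 \<partial>K x) * (\<integral>\<^sup>+y. 1 ^ 2 \<partial>K x)"
    by (rule Cauchy_Schwarz_nn_integral) auto
  also have "\<dots> = (\<integral>\<^sup>+y. ennreal ((g y)\<^sup>2) \<partial>K x)"
    by (simp add: ennreal_power P.emeasure_space_1)
  finally show ?thesis .
next
  case False then show ?thesis by (simp add: markov_op_def not_integrable_integral_eq)
qed

lemma Kop_L2:
  assumes g[measurable]: "g \<in> borel_measurable \<pi>" and I: "integrable \<pi> (\<lambda>x. (g x)\<^sup>2)"
  shows "integrable \<pi> (\<lambda>x. (markov_op K g x)\<^sup>2)"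
proof (subst integrable_iff_bounded, intro conjI)
  show "(\<lambda>x. (markov_op K g x)\<^sup>2) \<in> borel_measurable \<pi>" by measurable
  have "(\<integral>\<^sup>+x. ennreal (norm ((markov_op K g x)\<^sup>2)) \<partial>\<pi>) \<le> (\<integral>\<^sup>+x. \<integral>\<^sup>+y. ennreal ((g y)\<^sup>2) \<partial>K x \<partial>\<pi>)"
    by (intro nn_integral_mono) (simp add: jensen_pt)
  also have "\<dots> = (\<integral>\<^sup>+z. ennreal ((g (snd z))\<^sup>2) \<partial>mu)"
    by (subst nn_mu) auto
  also have "\<dots> = (\<integral>\<^sup>+x. ennreal ((g x)\<^sup>2) \<partial>\<pi>)"
    by (rule nn_snd) simp
  also have "\<dots> < \<infinity>" using integrableD(2)[OF I] by (simp add: less_top)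
  finally show "(\<integral>\<^sup>+x. ennreal (norm ((markov_op K g x)\<^sup>2)) \<partial>\<pi>) < \<infinity>" .
qed

lemma prod_int:
  fixes g h :: "'a \<Rightarrow> real"
  assumes [measurable]: "g \<in> borel_measurable \<pi>" "h \<in> borel_measurable \<pi>"
    and ig: "integrable \<pi> (\<lambda>x. (g x)\<^sup>2)" and ih: "integrable \<pi> (\<lambda>x. (h x)\<^sup>2)"
  shows "integrable mu (\<lambda>z. g (fst z) * h (snd z))"
proof (subst integrable_iff_bounded, intro conjI)
  show "(\<lambda>z. g (fst z) * h (snd z)) \<in> borel_measurable mu"
    by (simp add: measurable_cong_sets[OF sets_mu refl])
  have "(\<integral>\<^sup>+z. ennreal \<bar>g (fst z)\<bar> * ennreal \<bar>h (snd z)\<bar> \<partial>mu)\<^sup>2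
      \<le> (\<integral>\<^sup>+z. ennreal \<bar>g (fst z)\<bar> ^ 2 \<partial>mu) * (\<integral>\<^sup>+z. ennreal \<bar>h (snd z)\<bar> ^ 2 \<partial>mu)"
    by (rule Cauchy_Schwarz_nn_integral) (auto simp: measurable_cong_sets[OF sets_mu refl])
  also have "(\<integral>\<^sup>+z. ennreal \<bar>g (fst z)\<bar> ^ 2 \<partial>mu) = (\<integral>\<^sup>+x. ennreal ((g x)\<^sup>2) \<partial>\<pi>)"
    by (simp add: ennreal_power, rule nn_fst, simp)
  also have "(\<integral>\<^sup>+z. ennreal \<bar>h (snd z)\<bar> ^ 2 \<partial>mu) = (\<integral>\<^sup>+x. ennreal ((h x)\<^sup>2) \<partial>\<pi>)"
    by (simp add: ennreal_power, rule nn_snd, simp)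
  also have "(\<integral>\<^sup>+x. ennreal ((g x)\<^sup>2) \<partial>\<pi>) * (\<integral>\<^sup>+x. ennreal ((h x)\<^sup>2) \<partial>\<pi>) < \<infinity>"
    using integrableD(2)[OF ig] integrableD(2)[OF ih] by (simp add: ennreal_mult_less_top less_top)
  finally have "(\<integral>\<^sup>+z. ennreal \<bar>g (fst z)\<bar> * ennreal \<bar>h (snd z)\<bar> \<partial>mu) < \<infinity>"
    by (simp add: power_less_top_ennreal)
  then show "(\<integral>\<^sup>+z. ennreal (norm (g (fst z) * h (snd z))) \<partial>mu) < \<infinity>"
    by (simp add: abs_mult ennreal_mult)
qed

lemma selfadj:
  fixes g h :: "'a \<Rightarrow> real"
  assumes [measurable]: "g \<in> borel_measurable \<pi>" "h \<in> borel_measurable \<pi>"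
    and ig: "integrable \<pi> (\<lambda>x. (g x)\<^sup>2)" and ih: "integrable \<pi> (\<lambda>x. (h x)\<^sup>2)"
  shows "(\<integral>x. g x * markov_op K h x \<partial>\<pi>) = (\<integral>x. markov_op K g x * h x \<partial>\<pi>)"
proof -
  have e1: "(\<integral>z. g (fst z) * h (snd z) \<partial>mu) = (\<integral>x. g x * markov_op K h x \<partial>\<pi>)"
    by (subst int_mu[OF _ prod_int[OF assms]]) (simp_all add: markov_op_def)
  have e2: "(\<integral>z. h (fst z) * g (snd z) \<partial>mu) = (\<integral>x. h x * markov_op K g x \<partial>\<pi>)"
    by (subst int_mu[OF _ prod_int[OF assms(2,1) ih ig]]) (simp_all add: markov_op_def)
  have "(\<integral>z. g (fst z) * h (snd z) \<partial>mu) = (\<integral>z. h (fst z) * g (snd z) \<partial>mu)"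
    by (subst int_swap) (simp_all add: mult.commute)
  then show ?thesis using e1 e2 by (simp add: mult.commute)
qed

end

theorem lemma7:
  fixes \<pi> :: "'a measure" and K :: "'a \<Rightarrow> 'a measure" and f :: "'a \<Rightarrow> real" and n :: nat
  assumes "prob_space \<pi>"
    and "K \<in> \<pi> \<rightarrow>\<^sub>M prob_algebra \<pi>"
    and "reversible \<pi> K"
    and "f \<in> borel_measurable \<pi>"
    and "integrable \<pi> (\<lambda>x. (f x)\<^sup>2)"
    and "l2_norm_sq \<pi> f \<noteq> 0"
    and "n \<ge> 1"
  shows "l2_norm_sq \<pi> ((markov_op K ^^ n) f) / l2_norm_sq \<pi> f
           \<ge> (l2_norm_sq \<pi> (markov_op K f) / l2_norm_sq \<pi> f) ^ n"
proof -
  interpret revk \<pi> K by (rule revk.intro[OF assms(1-3)])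
  define g where "g k = (markov_op K ^^ k) f" for k
  have gS: "g (Suc k) = markov_op K (g k)" for k by (simp add: g_def)
  have gk: "g k \<in> borel_measurable \<pi> \<and> integrable \<pi> (\<lambda>x. (g k x)\<^sup>2)" for k
  proof (induction k)
    case 0 then show ?case using assms(4,5) by (simp add: g_def)
  next
    case (Suc k) then show ?case by (simp add: gS Kop_L2 Kop_meas)
  qed
  define c where "c k = l2_norm_sq \<pi> (g k)" for k
  have nn: "c k \<ge> 0" for k unfolding c_def l2_norm_sq_def by (simp add: integral_nonneg)
  have lc: "(c (Suc k))\<^sup>2 \<le> c k * c (Suc (Suc k))" for k
  proof -
    have "c (Suc k) = (\<integral>x. markov_op K (g k) x * g (Suc k) x \<partial>\<pi>)"
      unfolding c_def l2_norm_sq_def by (simp add: gS power2_eq_square)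
    also have "\<dots> = (\<integral>x. g k x * markov_op K (g (Suc k)) x \<partial>\<pi>)"
      using gk[of k] gk[of "Suc k"] by (intro selfadj[symmetric]) auto
    also have "\<dots> = (\<integral>x. g k x * g (Suc (Suc k)) x \<partial>\<pi>)" by (simp add: gS)
    finally have "(c (Suc k))\<^sup>2 = (\<integral>x. g k x * g (Suc (Suc k)) x \<partial>\<pi>)\<^sup>2" by simp
    also have "\<dots> \<le> c k * c (Suc (Suc k))"
      unfolding c_def l2_norm_sq_def
      using gk[of k] gk[of "Suc (Suc k)"] by (intro real_CS) auto
    finally show ?thesis .
  qed
  have "c n / c 0 \<ge> (c 1 / c 0) ^ n"
    by (rule logconv[of c, OF nn lc]) (use assms(6,7) in \<open>auto simp: c_def g_def\<close>)
  then show ?thesis by (simp add: c_def g_def)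
qed

end
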